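(* Let $\alpha>-1$ with $\alpha\neq-\tfrac12$, $M\ge0$, and for $n=0,1,2,\ldots$ let $$P_n^{\alpha,\alpha,M,M}(x)=C_0P_n^{(\alpha,\alpha)}(x)-C_1x\frac{d}{dx}P_n^{(\alpha,\alpha)}(x),$$ where $$C_0=1+M\frac{2n}{\alpha+1}\binom{n+2\alpha+1}{n}+4M^2\binom{n+2\alpha+1}{n-1}^2,\qquad C_1=\frac{2M}{2\alpha+1}\binom{n+2\alpha}{n}+\frac{2M^2}{\alpha+1}\binom{n+2\alpha}{n-1}\binom{n+2\alpha+1}{n}.$$ Then $y=P_n^{\alpha,\alpha,M,M}$ satisfies the linear infinite order differential equation $$\sum_{i=0}^\infty b_i(x)y^{(i)}(x)=0,$$ where $b_0(x)=b_0(n,\alpha,x)=\tfrac12\big[1-(-1)^n\big]$ and $b_i(x)=\frac{2^{i-1}}{i!}(-x)^i$ for $i=1,2,3,\ldots$.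
   Context: $P_n^{(\alpha,\alpha)}(x)=\binom{n+\alpha}{n}\,{}_2F_1\!\left(\begin{matrix}-n,\;n+2\alpha+1\\ \alpha+1\end{matrix};\frac{1-x}{2}\right)$ is the classical symmetric Jacobi polynomial; $\binom{\gamma}{m}$ is the generalized binomial coefficient (zero for $m<0$). $P_n^{\alpha,\alpha,M,M}$ are Koornwinder's generalized Jacobi polynomials orthogonal on $[-1,1]$ with respect to $\frac{\Gamma(2\alpha+2)}{2^{2\alpha+1}\Gamma(\alpha+1)^2}(1-x^2)^\alpha+M\delta(x+1)+M\delta(x-1)$. The sum is finite on polynomials. *)

theory Defs
  imports Complex_Main "HOL-Computational_Algebra.Polynomial"
begin

definition gbinom :: "real \<Rightarrow> int \<Rightarrow> real" where
  "gbinom \<gamma> m = (if m < 0 then 0 else \<gamma> gchoose (nat m))"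

text \<open>Classical symmetric Jacobi polynomial
  P_n^(a,a)(x) = binom(n+a,n) * 2F1(-n, n+2a+1; a+1; (1-x)/2).\<close>
definition jacobi_sym :: "nat \<Rightarrow> real \<Rightarrow> real poly" where
  "jacobi_sym n a = smult (gbinom (real n + a) (int n))
     (\<Sum>k\<le>n. smult (pochhammer (- real n) k * pochhammer (real n + 2 * a + 1) k
                     / (pochhammer (a + 1) k * fact k))
               ([:1/2, -1/2:] ^ k))"

definition koorn_C0 :: "nat \<Rightarrow> real \<Rightarrow> real \<Rightarrow> real" where
  "koorn_C0 n a M = 1 + M * (2 * real n / (a + 1)) * gbinom (real n + 2 * a + 1) (int n)
     + 4 * M\<^sup>2 * (gbinom (real n + 2 * a + 1) (int n - 1))\<^sup>2"

definition koorn_C1 :: "nat \<Rightarrow> real \<Rightarrow> real \<Rightarrow> real" where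
  "koorn_C1 n a M = (2 * M / (2 * a + 1)) * gbinom (real n + 2 * a) (int n)
     + (2 * M\<^sup>2 / (a + 1)) * gbinom (real n + 2 * a) (int n - 1)
         * gbinom (real n + 2 * a + 1) (int n)"

definition koornwinder_sym :: "nat \<Rightarrow> real \<Rightarrow> real \<Rightarrow> real poly" where
  "koornwinder_sym n a M =
     smult (koorn_C0 n a M) (jacobi_sym n a)
     - smult (koorn_C1 n a M) ([:0, 1:] * pderiv (jacobi_sym n a))"

definition b_coeff :: "nat \<Rightarrow> nat \<Rightarrow> real \<Rightarrow> real" where
  "b_coeff n i x = (if i = 0 then (1 - (-1) ^ n) / 2
                    else 2 ^ (i - 1) / fact i * (- x) ^ i)"

end

theory Submission
  imports Defs
begin


lemma higher_pderiv_above: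
  fixes p :: "real poly"
  assumes "m > degree p"
  shows "(pderiv ^^ m) p = 0"
proof (rule poly_eqI)
  fix k
  show "coeff ((pderiv ^^ m) p) k = coeff 0 k"
    using assms by (simp add: coeff_higher_pderiv coeff_eq_0)
qed

lemma taylor_poly:
  fixes p :: "real poly"
  shows "poly p (c + h) = (\<Sum>m<Suc (degree p). poly ((pderiv ^^ m) p) c / fact m * h ^ m)"
proof (cases "h = 0")
  case True
  then show ?thesis by (simp add: sum.lessThan_Suc_shift)
next
  case False
  define diff where "diff = (\<lambda>m t. poly ((pderiv ^^ m) p) t)"
  have "\<exists>t. (if c + h < c then c + h < t \<and> t < c else c < t \<and> t < c + h) \<and>
    poly p (c + h) = (\<Sum>m<Suc (degree p). (diff m c / fact m) * (c + h - c)^m)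
      + (diff (Suc (degree p)) t / fact (Suc (degree p))) * (c + h - c)^(Suc (degree p))"
    apply (rule Taylor[where a = "c - \<bar>h\<bar>" and b = "c + \<bar>h\<bar>"])
    using False by (auto simp: diff_def)
  then obtain t where "poly p (c + h) = (\<Sum>m<Suc (degree p). (diff m c / fact m) * (c + h - c)^m)
      + (diff (Suc (degree p)) t / fact (Suc (degree p))) * (c + h - c)^(Suc (degree p))" by blast
  moreover have "diff (Suc (degree p)) t = 0"
    unfolding diff_def by (simp only: higher_pderiv_above[of p "Suc (degree p)"]) simp
  ultimately show ?thesis by (simp add: diff_def)
qed



definition cc :: "nat \<Rightarrow> real \<Rightarrow> nat \<Rightarrow> real" where
  "cc n a k = pochhammer (- real n) k * pochhammer (real n + 2 * a + 1) k
                     / (pochhammer (a + 1) k * fact k)"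

definition FF :: "nat \<Rightarrow> real \<Rightarrow> real poly" where
  "FF n a = (\<Sum>k\<le>n. monom (cc n a k) k)"

lemma coeff_FF: "coeff (FF n a) k = cc n a k"
proof -
  have "coeff (FF n a) k = (if k \<le> n then cc n a k else 0)"
    unfolding FF_def by (simp add: coeff_sum coeff_monom)
  moreover have "k > n \<Longrightarrow> cc n a k = 0"
    unfolding cc_def using pochhammer_of_nat_eq_0_lemma[of n k, where ?'a=real] by simp
  ultimately show ?thesis by (cases "k \<le> n") auto
qed

lemma cc_rec:
  assumes "a > -1"
  shows "cc n a (Suc k) * (real k + 1) * (real k + a + 1)
     = (real k - real n) * (real k + real n + 2 * a + 1) * cc n a k"
proof -
  have p: "pochhammer (a + 1) k > 0" using assms by (intro pochhammer_pos) simp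
  have q: "real k + a + 1 > 0" using assms by simp
  have h: "P * (- real n + real k) * (Q * (real n + 2 * a + 1 + real k)) / (R * (a + 1 + real k) * ((real k + 1) * F))
      * (real k + 1) * (real k + a + 1) = (real k - real n) * (real k + real n + 2 * a + 1) * (P * Q / (R * F))"
    if "R > 0" "F > 0" for P Q R F :: real
  proof -
    have n1: "a + 1 + real k \<noteq> 0" "real k + 1 \<noteq> 0" "R \<noteq> 0" "F \<noteq> 0" using that q by auto
    show ?thesis using n1 by (simp add: divide_simps) (simp add: algebra_simps)
  qed
  have e1: "cc n a (Suc k) = pochhammer (- real n) k * (- real n + real k) * (pochhammer (real n + 2*a+1) k * (real n + 2*a+1 + real k)) / (pochhammer (a+1) k * (a + 1 + real k) * ((real k + 1) * fact k))"
    unfolding cc_def pochhammer_Suc fact_Suc by (simp add: algebra_simps)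
  have e2: "cc n a k = pochhammer (- real n) k * pochhammer (real n + 2*a+1) k / (pochhammer (a+1) k * fact k)"
    by (simp add: cc_def)
  show ?thesis by (simp only: e1 e2 h[OF p fact_gt_zero])
qed

lemma pcompose_X_power: "pcompose ([:0, 1:] ^ k) q = q ^ k"
proof (induction k)
  case 0
  then show ?case by (simp add: pcompose_1)
next
  case (Suc k)
  then show ?case by (simp only: power_Suc pcompose_mult) (simp add: pcompose_pCons)
qed

lemma jacobi_FF: "jacobi_sym n a = smult (gbinom (real n + a) (int n)) (pcompose (FF n a) [:1/2, -1/2:])"
  unfolding jacobi_sym_def FF_def cc_def
  by (simp add: pcompose_sum pcompose_smult monom_altdef pcompose_X_power)

definition DF :: "real \<Rightarrow> real \<Rightarrow> real poly \<Rightarrow> real poly" where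
  "DF c lam F = [:0, 1, -1:] * pderiv (pderiv F) + [:c, -2*c:] * pderiv F + smult lam F"

lemma DF_zero:
  assumes "a > -1"
  shows "DF (a + 1) (real n * (real n + 2 * a + 1)) (FF n a) = 0"
proof (rule poly_eqI)
  fix k
  show "coeff (DF (a + 1) (real n * (real n + 2 * a + 1)) (FF n a)) k = coeff 0 k"
  proof (cases k)
    case 0
    then show ?thesis using cc_rec[OF assms, of n 0]
      by (simp add: DF_def coeff_pderiv coeff_FF algebra_simps)
  next
    case (Suc j)
    then show ?thesis using cc_rec[OF assms, of n k]
      by (cases j) (simp_all add: DF_def coeff_pderiv coeff_FF coeff_pCons algebra_simps)
  qed
qed


definition Lop :: "real \<Rightarrow> nat \<Rightarrow> real poly \<Rightarrow> real poly" where
  "Lop a n q = [:1, 0, -1:] * pderiv (pderiv q) - smult (2 * (a + 1)) ([:0, 1:] * pderiv q)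
     + smult (real n * (real n + 2 * a + 1)) q"

lemma Lop_jacobi:
  assumes "a > -1"
  shows "Lop a n (jacobi_sym n a) = 0"
proof -
  define F where "F = FF n a"
  define G where "G = gbinom (real n + a) (int n)"
  define T :: "real poly" where "T = [:1/2, -1/2:]"
  have J: "jacobi_sym n a = smult G (pcompose F T)" unfolding F_def G_def T_def by (rule jacobi_FF)
  have d1: "pderiv (jacobi_sym n a) = smult (- G / 2) (pcompose (pderiv F) T)"
    unfolding J by (simp add: pderiv_pcompose pderiv_smult T_def pderiv_pCons)
  have d2: "pderiv (pderiv (jacobi_sym n a)) = smult (G / 4) (pcompose (pderiv (pderiv F)) T)"
    unfolding d1 by (simp add: pderiv_pcompose pderiv_smult pderiv_minus T_def pderiv_pCons)
  have z: "poly (DF (a + 1) (real n * (real n + 2 * a + 1)) F) t = 0" for t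
    using DF_zero[OF assms] F_def by simp
  show ?thesis
  proof (rule poly_ext)
    fix x
    have "poly (Lop a n (jacobi_sym n a)) x = G * poly (DF (a + 1) (real n * (real n + 2 * a + 1)) F) (1/2 - x/2)"
      unfolding Lop_def d2 unfolding d1 DF_def
      by (simp add: J poly_pcompose T_def algebra_simps) (simp add: field_simps)
    then show "poly (Lop a n (jacobi_sym n a)) x = poly 0 x" using z by simp
  qed
qed


lemma rd1: "pderiv (pcompose q [:0, -1:]) = - pcompose (pderiv q) [:0, -1:]"
  for q :: "real poly"
  by (simp add: pderiv_pcompose pderiv_pCons)

lemma rd2: "pderiv (pderiv (pcompose q [:0, -1:])) = pcompose (pderiv (pderiv q)) [:0, -1:]"
  for q :: "real poly"
  by (simp add: rd1 pderiv_minus)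

lemma Lop_R: "Lop a n (pcompose q [:0, -1:]) = pcompose (Lop a n q) [:0, -1:]"
proof (rule poly_ext)
  fix x
  show "poly (Lop a n (pcompose q [:0, -1:])) x = poly (pcompose (Lop a n q) [:0, -1:]) x"
    unfolding Lop_def rd2 unfolding rd1
    by (simp add: poly_pcompose algebra_simps)
qed

lemma Lop_lin: "Lop a n (p - smult c q) = Lop a n p - smult c (Lop a n q)"
proof (rule poly_ext)
  fix x
  show "poly (Lop a n (p - smult c q)) x = poly (Lop a n p - smult c (Lop a n q)) x"
    unfolding Lop_def by (simp add: pderiv_diff pderiv_smult algebra_simps)
qed

lemma coeff_Lop_degree:
  "coeff (Lop a n q) (degree q) =
     (real n * (real n + 2 * a + 1) - real (degree q) * (real (degree q) - 1)
       - 2 * (a + 1) * real (degree q)) * coeff q (degree q)"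
proof -
  have gen: "coeff (Lop a n q) d =
     (real n * (real n + 2 * a + 1) - real d * (real d - 1)
       - 2 * (a + 1) * real d) * coeff q d" if dq: "degree q = d" for d
  proof -
  have z: "coeff q k = 0" if "k > d" for k using that dq coeff_eq_0 by auto
  show ?thesis
  proof (cases d)
    case 0
    then show ?thesis using z by (simp add: Lop_def coeff_pderiv)
  next
    case (Suc m)
    then show ?thesis using z
      by (cases m) (simp_all add: Lop_def coeff_pderiv coeff_pCons algebra_simps)
  qed
  qed
  show ?thesis by (rule gen) simp
qed

lemma jacobi_parity:
  assumes "a > -1"
  shows "pcompose (jacobi_sym n a) [:0, -1:] = smult ((-1) ^ n) (jacobi_sym n a)"
proof -
  define J where "J = jacobi_sym n a"
  define q where "q = J - smult ((-1) ^ n) (pcompose J [:0, -1:])"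
  have LJ: "Lop a n J = 0" unfolding J_def using Lop_jacobi[OF assms] .
  have Lq: "Lop a n q = 0"
    unfolding q_def Lop_lin Lop_R LJ by (simp add: pcompose_0)
  have cq: "coeff q k = (1 - (-1) ^ (n + k)) * coeff J k" for k
    unfolding q_def by (simp add: coeff_pcompose_linear power_add algebra_simps)
  have "q = 0"
  proof (rule ccontr)
    assume "q \<noteq> 0"
    define d where "d = degree q"
    have lc: "coeff q d \<noteq> 0" using \<open>q \<noteq> 0\<close> d_def by simp
    hence "(-1::real) ^ (n + d) \<noteq> 1" using cq[of d] by auto
    hence par: "odd (n + d)" by (auto simp: minus_one_power_iff split: if_splits)
    have "(real n * (real n + 2 * a + 1) - real d * (real d - 1) - 2 * (a + 1) * real d) * coeff q d = 0"
      using coeff_Lop_degree[of a n q] Lq d_def by simp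
    hence e: "real n * (real n + 2 * a + 1) - real d * (real d - 1) - 2 * (a + 1) * real d = 0"
      using lc by simp
    have f: "(real n - real d) * (real n + real d + 2 * a + 1) = 0"
      using e by (simp add: algebra_simps)
    have "n \<noteq> d" using par by auto
    moreover have "n + d \<ge> 1" using par by (cases "n + d") auto
    ultimately show False using f assms by auto
  qed
  hence "J = smult ((-1) ^ n) (pcompose J [:0, -1:])" unfolding q_def by simp
  hence "smult ((-1) ^ n) J = smult ((-1) ^ n) (smult ((-1) ^ n) (pcompose J [:0, -1:]))"
    by (rule arg_cong)
  hence "smult ((-1) ^ n) J = smult ((-1) ^ n * (-1) ^ n) (pcompose J [:0, -1:])"
    by (simp only: smult_smult)
  also have "(-1) ^ n * (-1) ^ n = (1::real)" by (simp flip: power_add)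
  finally show ?thesis unfolding J_def by simp
qed


lemma koorn_parity:
  assumes "a > -1"
  shows "poly (koornwinder_sym n a M) (- x) = (-1) ^ n * poly (koornwinder_sym n a M) x"
proof -
  define J where "J = jacobi_sym n a"
  have P: "pcompose J [:0, -1:] = smult ((-1) ^ n) J" unfolding J_def using jacobi_parity[OF assms] .
  have PD: "- pcompose (pderiv J) [:0, -1:] = smult ((-1) ^ n) (pderiv J)"
    using arg_cong[OF P, of pderiv] by (simp add: rd1 pderiv_smult)
  have j0: "poly J (- x) = (-1) ^ n * poly J x"
    using arg_cong[OF P, of "\<lambda>p. poly p x"] by (simp add: poly_pcompose)
  have j1: "poly (pderiv J) (- x) = - ((-1) ^ n * poly (pderiv J) x)"
    using arg_cong[OF PD, of "\<lambda>p. poly p x"] by (simp add: poly_pcompose)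
  show ?thesis
    unfolding koornwinder_sym_def J_def[symmetric]
    by (simp add: j0 j1 algebra_simps)
qed

theorem mainTheorem5:
  fixes a M x :: real and n :: nat
  assumes "a > -1" and "a \<noteq> -1/2" and "M \<ge> 0"
  shows "(\<lambda>i. b_coeff n i x * poly ((pderiv ^^ i) (koornwinder_sym n a M)) x) sums 0"
proof -
  define y where "y = koornwinder_sym n a M"
  define D where "D = degree y"
  define Y where "Y = (\<lambda>i. poly ((pderiv ^^ i) y) x)"
  define s :: real where "s = (-1) ^ n"
  have par: "poly y (- x) = s * poly y x" unfolding y_def s_def using koorn_parity[OF assms(1)] .
  have T: "poly y (x + (- 2 * x)) = (\<Sum>m<Suc D. Y m / fact m * (- 2 * x) ^ m)"
    unfolding Y_def D_def by (rule taylor_poly)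
  define S where "S = (\<Sum>m<D. Y (Suc m) / fact (Suc m) * (- 2 * x) ^ Suc m)"
  have T2: "poly y (- x) = Y 0 + S"
    using T unfolding S_def sum.lessThan_Suc_shift by simp
  have Y0: "Y 0 = poly y x" unfolding Y_def by simp
  have b0: "b_coeff n 0 x = (1 - s) / 2" unfolding b_coeff_def s_def by simp
  have bs: "b_coeff n (Suc m) x * Y (Suc m) = (1/2) * (Y (Suc m) / fact (Suc m) * (- 2 * x) ^ Suc m)" for m
  proof -
    have pw: "(- (x * 2)) ^ m = (- x) ^ m * 2 ^ m" by (metis minus_mult_left power_mult_distrib)
    show ?thesis unfolding b_coeff_def using pw by (simp add: field_simps)
  qed
  have sumeq: "(\<Sum>i<Suc D. b_coeff n i x * Y i) = 0"
  proof -
    have "(\<Sum>i<Suc D. b_coeff n i x * Y i) = b_coeff n 0 x * Y 0 + (\<Sum>m<D. b_coeff n (Suc m) x * Y (Suc m))"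
      by (simp only: sum.lessThan_Suc_shift)
    also have "(\<Sum>m<D. b_coeff n (Suc m) x * Y (Suc m)) = (1/2) * S"
      unfolding S_def sum_distrib_left by (rule sum.cong) (simp_all add: bs)
    finally show ?thesis using T2 Y0 par b0 by (simp add: algebra_simps)
  qed
  have "(\<lambda>i. b_coeff n i x * Y i) sums (\<Sum>i\<in>{..<Suc D}. b_coeff n i x * Y i)"
  proof (rule sums_finite)
    fix i assume "i \<notin> {..<Suc D}"
    hence "i > degree y" unfolding D_def by simp
    then show "b_coeff n i x * Y i = 0" unfolding Y_def by (simp add: higher_pderiv_above)
  qed simp
  then show ?thesis using sumeq unfolding Y_def y_def by simp
qed

end
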